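(* Let $V$ be a complex vector space of finite dimension $N$. Let $F\in \mathrm{End}(V\otimes V)$ be an involutive symmetry and let $R=R(q)$ be a family of Hecke symmetries depending analytically on $q$ near $q=1$ with $R(1)=F$ and with $R(q)$, $F$ compatible for each $q$. Let $r\in\mathrm{End}(V\otimes V)$ be defined by the expansion $R(q)F=I+h\,r+O(h^2)$, $q=e^h$. Define the $\mathrm{End}(V\otimes V)$-valued function $$ r(u,v)=\frac{F\,u}{u-v}-\frac{r}{2}. $$ Then (1) $r_{\overline{21}}(v,u)+r_{\overline{12}}(u,v)=0$; (2) $[r_{\overline{12}}(u,v), r_{\overline{13}}(u,w)]+[r_{\overline{12}}(u,v), r_{\overline{23}}(v,w)]+[r_{\overline{13}}(u,w), r_{\overline{23}}(v,w)]=0$ in $\mathrm{End}(V^{\otimes 3})$, for all pairwise distinct $u,v,w$ (with $u\ne v$ etc.).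
   Context: A braiding is an invertible $R\in\mathrm{End}(V\otimes V)$ with $(R\otimes I)(I\otimes R)(R\otimes I)=(I\otimes R)(R\otimes I)(I\otimes R)$; it is an involutive symmetry if $R^2=I$, a Hecke symmetry if $(R-qI)(R+q^{-1}I)=0$, $q\ne\pm1$. $X_{12}=X\otimes I$, $X_{23}=I\otimes X$. Compatibility of $R,F$: $R_{12}F_{23}F_{12}=F_{23}F_{12}R_{23}$ and $R_{23}F_{12}F_{23}=F_{12}F_{23}R_{12}$. Overlined indices: for $X=X(a,b)\in\mathrm{End}(V\otimes V)$, $X_{\overline{12}}(a,b)=X(a,b)_{12}$, $X_{\overline{13}}(a,b)=F_{23}X(a,b)_{12}F_{23}^{-1}$, $X_{\overline{23}}(a,b)=F_{12}F_{23}X(a,b)_{12}F_{23}^{-1}F_{12}^{-1}$, and $X_{\overline{21}}(a,b)=F\,X(a,b)\,F$ (valid since $F$ is involutive). $[A,B]=AB-BA$. *)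

theory Defs
  imports "HOL-Analysis.Analysis"
begin

text \<open>V = complex^'n (dimension N = CARD('n)); End(V\<otimes>V) and End(V\<otimes>V\<otimes>V) as matrices
  indexed by the product bases.\<close>

type_synonym 'n end2 = "complex ^ ('n \<times> 'n) ^ ('n \<times> 'n)"
type_synonym 'n end3 = "complex ^ ('n \<times> 'n \<times> 'n) ^ ('n \<times> 'n \<times> 'n)"

definition csc :: "complex \<Rightarrow> complex ^ 'a ^ 'b \<Rightarrow> complex ^ 'a ^ 'b" where
  "csc c A = (\<chi> i j. c * A $ i $ j)"

text \<open>X_12 = X \<otimes> I\<close>
definition lift12 :: "'n::finite end2 \<Rightarrow> 'n end3" where
  "lift12 X = (\<chi> a b. X $ (fst a, fst (snd a)) $ (fst b, fst (snd b))
                    * (if snd (snd a) = snd (snd b) then 1 else 0))"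

text \<open>X_23 = I \<otimes> X\<close>
definition lift23 :: "'n::finite end2 \<Rightarrow> 'n end3" where
  "lift23 X = (\<chi> a b. (if fst a = fst b then 1 else 0) * X $ (snd a) $ (snd b))"

definition braiding :: "'n::finite end2 \<Rightarrow> bool" where
  "braiding R \<longleftrightarrow> invertible R \<and>
     lift12 R ** lift23 R ** lift12 R = lift23 R ** lift12 R ** lift23 R"

definition involutive_symmetry :: "'n::finite end2 \<Rightarrow> bool" where
  "involutive_symmetry R \<longleftrightarrow> braiding R \<and> R ** R = mat 1"

definition hecke_symmetry :: "'n::finite end2 \<Rightarrow> complex \<Rightarrow> bool" where
  "hecke_symmetry R q \<longleftrightarrow> braiding R \<and> q \<noteq> 1 \<and> q \<noteq> -1 \<and>
     (R - csc q (mat 1)) ** (R + csc (inverse q) (mat 1)) = 0"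

definition compatible :: "'n::finite end2 \<Rightarrow> 'n end2 \<Rightarrow> bool" where
  "compatible R F \<longleftrightarrow>
     lift12 R ** lift23 F ** lift12 F = lift23 F ** lift12 F ** lift23 R \<and>
     lift23 R ** lift12 F ** lift23 F = lift12 F ** lift23 F ** lift12 R"

definition ov12 :: "'n::finite end2 \<Rightarrow> 'n end3" where
  "ov12 X = lift12 X"

definition ov13 :: "'n::finite end2 \<Rightarrow> 'n end2 \<Rightarrow> 'n end3" where
  "ov13 F X = lift23 F ** lift12 X ** matrix_inv (lift23 F)"

definition ov23 :: "'n::finite end2 \<Rightarrow> 'n end2 \<Rightarrow> 'n end3" where
  "ov23 F X = lift12 F ** lift23 F ** lift12 X ** matrix_inv (lift23 F) ** matrix_inv (lift12 F)"

definition ov21 :: "'n::finite end2 \<Rightarrow> 'n end2 \<Rightarrow> 'n end2" where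
  "ov21 F X = F ** X ** F"

definition rfun :: "'n::finite end2 \<Rightarrow> 'n end2 \<Rightarrow> complex \<Rightarrow> complex \<Rightarrow> 'n end2" where
  "rfun F r u v = csc (u / (u - v)) F - csc (1/2) r"

definition commut :: "'a::ring_1 ^ 'n ^ 'n \<Rightarrow> 'a ^ 'n ^ 'n \<Rightarrow> 'a ^ 'n ^ 'n" where
  "commut A B = A ** B - B ** A"

end

theory Submission
  imports Defs
begin

lemma sum_UNIV_pair: "(\<Sum>c\<in>(UNIV::('a::finite\<times>'b::finite) set). f c) = (\<Sum>x\<in>UNIV. \<Sum>y\<in>UNIV. f (x,y))"
  by (simp add: sum.cartesian_product UNIV_Times_UNIV[symmetric] del: UNIV_Times_UNIV)

lemma sum_if_const: "(\<Sum>y\<in>A. if P then f y else 0) = (if P then sum f A else 0)"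
  by simp

lemma lift12_mul: "lift12 (A ** B) = lift12 A ** lift12 B"
  apply (simp add: vec_eq_iff lift12_def matrix_matrix_mult_def sum_UNIV_pair)
  apply (auto simp: sum_distrib_left sum_distrib_right if_distrib if_distribR sum.delta cong: if_cong)
  done

lemma lift23_mul: "lift23 (A ** B) = lift23 A ** lift23 B"
  apply (simp add: vec_eq_iff lift23_def matrix_matrix_mult_def sum_UNIV_pair)
  apply (auto simp: sum_distrib_left sum_distrib_right if_distrib if_distribR sum_if_const sum.delta cong: if_cong)
  done

lemma csc_nth[simp]: "csc c A $ i $ j = c * A $ i $ j"
  by (simp add: csc_def)

lemma csc_add: "csc c (A + B) = csc c A + csc c B"
  by (simp add: vec_eq_iff algebra_simps)
lemma csc_diff: "csc c (A - B) = csc c A - csc c B"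
  by (simp add: vec_eq_iff algebra_simps)
lemma csc_csc[simp]: "csc a (csc b A) = csc (a*b) A"
  by (simp add: vec_eq_iff algebra_simps)
lemma csc_one[simp]: "csc 1 A = A"
  by (simp add: vec_eq_iff)
lemma csc_zero[simp]: "csc 0 A = 0"
  by (simp add: vec_eq_iff)
lemma csc_0[simp]: "csc c 0 = 0"
  by (simp add: vec_eq_iff)
lemma csc_plus: "csc (a+b) A = csc a A + csc b A"
  by (simp add: vec_eq_iff algebra_simps)
lemma csc_minus: "csc (a-b) A = csc a A - csc b A"
  by (simp add: vec_eq_iff algebra_simps)
lemma csc_mul_left: "csc c A ** B = csc c (A ** B)"
  by (simp add: vec_eq_iff matrix_matrix_mult_def sum_distrib_left algebra_simps)
lemma csc_mul_right: "A ** csc c B = csc c (A ** B)"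
  by (simp add: vec_eq_iff matrix_matrix_mult_def sum_distrib_left algebra_simps)
lemma csc_cancel: "csc c A = 0 \<Longrightarrow> c \<noteq> 0 \<Longrightarrow> A = 0"
  by (simp add: vec_eq_iff)

lemma matrix_add_rdistrib': "(B + C) ** A = B ** A + C ** A"
  by (simp add: vec_eq_iff matrix_matrix_mult_def sum.distrib algebra_simps)
lemma matrix_sub_ldistrib': "(A::'a::ring_1^'n^'m) ** (B - C) = A ** B - A ** C"
  by (simp add: vec_eq_iff matrix_matrix_mult_def right_diff_distrib left_diff_distrib sum_subtractf)
lemma matrix_sub_rdistrib': "((B::'a::ring_1^'n^'m) - C) ** A = B ** A - C ** A"
  by (simp add: vec_eq_iff matrix_matrix_mult_def right_diff_distrib left_diff_distrib sum_subtractf)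

lemmas mdist = matrix_add_ldistrib matrix_add_rdistrib' matrix_sub_ldistrib' matrix_sub_rdistrib'
  matrix_mul_assoc[symmetric] csc_mul_left csc_mul_right csc_add csc_diff

lemma lift12_add: "lift12 (A + B) = lift12 A + lift12 B"
  by (simp add: vec_eq_iff lift12_def algebra_simps)
lemma lift12_diff: "lift12 (A - B) = lift12 A - lift12 B"
  by (simp add: vec_eq_iff lift12_def algebra_simps)
lemma lift12_csc: "lift12 (csc c A) = csc c (lift12 A)"
  by (simp add: vec_eq_iff lift12_def algebra_simps)
lemma lift12_one: "lift12 (mat 1) = mat 1"
  by (auto simp add: vec_eq_iff lift12_def mat_def prod_eq_iff)
lemma lift23_add: "lift23 (A + B) = lift23 A + lift23 B"
  by (simp add: vec_eq_iff lift23_def algebra_simps)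
lemma lift23_diff: "lift23 (A - B) = lift23 A - lift23 B"
  by (simp add: vec_eq_iff lift23_def algebra_simps)
lemma lift23_csc: "lift23 (csc c A) = csc c (lift23 A)"
  by (simp add: vec_eq_iff lift23_def algebra_simps)
lemma lift23_one: "lift23 (mat 1) = mat 1"
  by (auto simp add: vec_eq_iff lift23_def mat_def prod_eq_iff)

lemma matrix_inv_self:
  fixes A :: "'a::semiring_1^'m^'m"
  assumes "A ** A = mat 1" shows "matrix_inv A = A"
proof -
  have ex: "\<exists>A'. A ** A' = mat 1 \<and> A' ** A = mat 1" using assms by blast
  show ?thesis unfolding matrix_inv_def
  proof (rule someI2_ex[OF ex])
    fix A' assume h: "A ** A' = mat 1 \<and> A' ** A = mat 1"
    have "A' = A' ** (A ** A)" using assms by simp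
    also have "\<dots> = (A' ** A) ** A" by (simp add: matrix_mul_assoc)
    also have "\<dots> = A" using h by simp
    finally show "A' = A" .
  qed
qed


lemma commut_expand:
  fixes A B P Q :: "complex^'m^'m"
  shows "commut (csc a A - csc x P) (csc b B - csc y Q) =
    csc (a*b) (commut A B) - csc (a*y) (commut A Q) - csc (x*b) (commut P B) + csc (x*y) (commut P Q)"
  by (simp add: commut_def mdist csc_minus algebra_simps)

lemma tendsto_mmul[tendsto_intros]:
  fixes A :: "'x \<Rightarrow> complex^'n^'m"
  assumes "(A \<longlongrightarrow> A0) F" "(B \<longlongrightarrow> B0) F"
  shows "((\<lambda>x. A x ** B x) \<longlongrightarrow> A0 ** B0) F"
  unfolding matrix_matrix_mult_def
  by (intro tendsto_vec_lambda tendsto_sum tendsto_mult tendsto_vec_nth assms)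

lemma tendsto_csc[tendsto_intros]:
  fixes A :: "'x \<Rightarrow> complex^'n^'m"
  assumes "(c \<longlongrightarrow> c0) F" "(A \<longlongrightarrow> A0) F"
  shows "((\<lambda>x. csc (c x) (A x)) \<longlongrightarrow> csc c0 A0) F"
  unfolding csc_def
  by (intro tendsto_vec_lambda tendsto_sum tendsto_mult tendsto_vec_nth assms)

lemma tendsto_lift12[tendsto_intros]:
  assumes "(A \<longlongrightarrow> A0) F"
  shows "((\<lambda>x. lift12 (A x)) \<longlongrightarrow> lift12 A0) F"
  unfolding lift12_def
  by (intro tendsto_vec_lambda tendsto_sum tendsto_mult tendsto_vec_nth assms tendsto_const)

lemma tendsto_lift23[tendsto_intros]:
  assumes "(A \<longlongrightarrow> A0) F"
  shows "((\<lambda>x. lift23 (A x)) \<longlongrightarrow> lift23 A0) F"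
  unfolding lift23_def
  by (intro tendsto_vec_lambda tendsto_sum tendsto_mult tendsto_vec_nth assms tendsto_const)

definition Lw :: "complex^'m^'m \<Rightarrow> complex^'m^'m \<Rightarrow> complex^'m^'m \<Rightarrow> complex^'m^'m \<Rightarrow> complex^'m^'m" where
  "Lw f1 f2 y1 y2 = y1**f2**f1 + f1**y2**f1 + f1**f2**y1 - (y2**f1**f2 + f2**y1**f2 + f2**f1**y2)"
definition Qw :: "complex^'m^'m \<Rightarrow> complex^'m^'m \<Rightarrow> complex^'m^'m \<Rightarrow> complex^'m^'m \<Rightarrow> complex^'m^'m" where
  "Qw f1 f2 y1 y2 = y1**y2**f1 + y1**f2**y1 + f1**y2**y1 - (y2**y1**f2 + y2**f1**y2 + f2**y1**y2)"
definition Kw :: "complex^'m^'m \<Rightarrow> complex^'m^'m \<Rightarrow> complex^'m^'m" where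
  "Kw y1 y2 = y1**y2**y1 - y2**y1**y2"

lemma braid_expand:
  fixes f1 f2 y1 y2 :: "complex^'m^'m"
  shows "(f1+y1)**(f2+y2)**(f1+y1) - (f2+y2)**(f1+y1)**(f2+y2)
     = (f1**f2**f1 - f2**f1**f2) + Lw f1 f2 y1 y2 + Qw f1 f2 y1 y2 + Kw y1 y2"
  by (simp add: Lw_def Qw_def Kw_def mdist algebra_simps)

lemma Lw_zero:
  fixes f1 f2 y1 y2 :: "complex^'m^'m"
  assumes s1: "f1**f1 = mat 1" and s2: "f2**f2 = mat 1"
    and c1: "y1**f2**f1 = f2**f1**y2" and c2: "y2**f1**f2 = f1**f2**y1"
  shows "Lw f1 f2 y1 y2 = 0"
proof -
  have "f2**(y1**f2**f1)**f1 = f2**(f2**f1**y2)**f1" using c1 by simp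
  hence m: "f2**y1**f2 = f1**y2**f1"
    by (simp add: matrix_mul_assoc s1 s2) (simp add: matrix_mul_assoc[symmetric] s1 s2)
  show ?thesis unfolding Lw_def using c1 c2 m by (simp add: algebra_simps)
qed

lemma Qw_scale:
  fixes f1 f2 y1 y2 :: "complex^'m^'m"
  shows "Qw f1 f2 (csc h y1) (csc h y2) = csc (h^2) (Qw f1 f2 y1 y2)"
  by (simp add: Qw_def mdist power2_eq_square algebra_simps)

lemma Kw_scale:
  fixes y1 y2 :: "complex^'m^'m"
  shows "Kw (csc h y1) (csc h y2) = csc (h^3) (Kw y1 y2)"
  by (simp add: Kw_def mdist power3_eq_cube algebra_simps)

lemma Q_to_cybe:
  fixes f1 f2 P T :: "complex^'m^'m"
  assumes s1: "f1**f1 = mat 1" and s2: "f2**f2 = mat 1" and br: "f1**f2**f1 = f2**f1**f2"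
    and Qrel: "Qw f1 f2 (P**f1) (T**f2) = 0"
    and Tdef: "T = f1**f2**P**f2**f1"
  shows "commut P (f2**P**f2) + commut P T + commut (f2**P**f2) T = 0"
proof -
  have s1': "f1**(f1**X) = X" for X by (simp add: matrix_mul_assoc s1)
  have s2': "f2**(f2**X) = X" for X by (simp add: matrix_mul_assoc s2)
  have s3: "f1**(f2**f1) = f2**(f1**f2)" using br by (simp add: matrix_mul_assoc)
  have s3': "f1**(f2**(f1**X)) = f2**(f1**(f2**X))" for X using br by (simp add: matrix_mul_assoc)
  have key: "(commut P (f2**P**f2) + commut P T + commut (f2**P**f2) T) ** (f2**f1**f2)
      = Qw f1 f2 (P**f1) (T**f2)"
    unfolding Tdef Qw_def commut_def
    by (simp add: mdist s1 s2 s1' s2' s3 s3' algebra_simps)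
  have inv: "(f2**f1**f2) ** (f2**f1**f2) = mat 1"
    by (simp add: mdist s1 s2 s1' s2' s3 s3')
  have "(commut P (f2**P**f2) + commut P T + commut (f2**P**f2) T) ** ((f2**f1**f2) ** (f2**f1**f2)) = 0"
    using key Qrel by (simp add: matrix_mul_assoc)
  thus ?thesis using inv by simp
qed

lemma cybe_final:
  fixes f1 f2 P :: "complex^'m^'m"
  assumes s1: "f1**f1 = mat 1" and s2: "f2**f2 = mat 1" and br: "f1**f2**f1 = f2**f1**f2"
    and rel: "P + f1**P**f1 = csc 2 f1"
    and CY: "commut P (f2**P**f2) + commut P (f1**f2**P**f2**f1) + commut (f2**P**f2) (f1**f2**P**f2**f1) = 0"
    and abc: "a*b - a*c + b*c = b"
  shows "commut (csc a f1 - csc (1/2) P) (csc b (f2**f1**f2) - csc (1/2) (f2**P**f2))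
       + commut (csc a f1 - csc (1/2) P) (csc c f2 - csc (1/2) (f1**f2**P**f2**f1))
       + commut (csc b (f2**f1**f2) - csc (1/2) (f2**P**f2)) (csc c f2 - csc (1/2) (f1**f2**P**f2**f1)) = 0"
proof -
  define Q where "Q = f2**P**f2"
  define T where "T = f1**f2**P**f2**f1"
  define G where "G = f2**f1**f2"
  define W where "W = f2**f1 - f1**f2"
  have s1': "f1**(f1**X) = X" for X by (simp add: matrix_mul_assoc s1)
  have s2': "f2**(f2**X) = X" for X by (simp add: matrix_mul_assoc s2)
  have s3: "f1**(f2**f1) = f2**(f1**f2)" using br by (simp add: matrix_mul_assoc)
  have s3': "f1**(f2**(f1**X)) = f2**(f1**(f2**X))" for X using br by (simp add: matrix_mul_assoc)
  note S3 = s1 s2 s1' s2' s3 s3'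
  have e1: "commut f1 G = W" unfolding G_def W_def commut_def by (simp add: mdist S3)
  have e2: "commut f1 f2 = - W" unfolding W_def commut_def by (simp add: mdist S3)
  have e3: "commut G f2 = W" unfolding G_def W_def commut_def by (simp add: mdist S3)
  have e4: "commut f1 Q = - commut f1 T" unfolding Q_def T_def commut_def by (simp add: mdist S3)
  have e5: "commut P f2 = - commut Q f2" unfolding Q_def commut_def by (simp add: mdist S3)
  have e7: "commut G T = - commut T G" unfolding commut_def by simp
  have e8: "commut Q T = - commut P Q - commut P T" using CY unfolding Q_def T_def
    by (simp add: algebra_simps eq_neg_iff_add_eq_0)
  have rel1: "f1**P**f1 = csc 2 f1 - P" using rel by (simp add: algebra_simps)
  have fP: "f1**P = csc 2 (mat 1) - P**f1"
  proof -
    have "f1**P**f1**f1 = (csc 2 f1 - P)**f1" using rel1 by simp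
    thus ?thesis by (simp add: mdist S3 csc_mul_left[symmetric])
  qed
  have Pf: "P**f1 = csc 2 (mat 1) - f1**P"
  proof -
    have "f1**(f1**P**f1) = f1**(csc 2 f1 - P)" using rel1 by simp
    thus ?thesis by (simp add: mdist S3 csc_mul_right[symmetric])
  qed
  have r1: "f1**P**f2**f1 = csc 2 (f2**f1) - P**G"
  proof -
    have "f1**P**(f2**f1) = (csc 2 (mat 1) - P**f1)**(f2**f1)" using fP by simp
    thus ?thesis unfolding G_def by (simp add: mdist S3)
  qed
  have r2: "f1**f2**P**f1 = csc 2 (f1**f2) - G**P"
  proof -
    have "(f1**f2)**(P**f1) = (f1**f2)**(csc 2 (mat 1) - f1**P)" using Pf by simp
    thus ?thesis unfolding G_def by (simp add: mdist S3)
  qed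
  have tf: "T**G = f1**f2**P**f1" unfolding T_def G_def by (simp add: mdist S3)
  have ft: "G**T = f1**P**f2**f1" unfolding T_def G_def by (simp add: mdist S3)
  have e6: "commut P G = commut T G + csc 2 W"
    unfolding commut_def tf ft r1 r2 W_def by (simp add: mdist algebra_simps)
  show ?thesis
    unfolding Q_def[symmetric] T_def[symmetric] G_def[symmetric]
    apply (simp add: commut_expand e1 e2 e3 e4 e5 e6 e7 e8)
    apply (simp add: vec_eq_iff algebra_simps)
    apply clarify
    subgoal for i j
    proof -
      have "(a*b - a*c + b*c) * W$i$j = b * W$i$j" using abc by simp
      thus ?thesis by (simp add: algebra_simps)
    qed
    done
qed

lemma exp_ne_pm1:
  fixes h :: complex assumes "h \<noteq> 0" "norm h < 1"
  shows "exp h \<noteq> 1 \<and> exp h \<noteq> -1"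
proof -
  have "exp (2*h) \<noteq> 1"
  proof
    assume "exp (2*h) = 1"
    then obtain n :: int where n: "Re (2*h) = 0" "Im (2*h) = of_int (2*n) * pi"
      unfolding exp_eq_1 by blast
    hence re: "Re h = 0" and im: "Im h = of_int n * pi" by simp_all
    show False
    proof (cases "n = 0")
      case True
      hence "h = 0" using re im by (simp add: complex_eq_iff)
      thus False using assms by simp
    next
      case False
      hence "1 \<le> \<bar>real_of_int n\<bar>" by linarith
      hence "pi \<le> \<bar>real_of_int n\<bar> * pi" by simp
      also have "\<dots> = \<bar>Im h\<bar>" using im by (simp add: abs_mult)
      also have "\<dots> \<le> norm h" by (rule abs_Im_le_cmod)
      finally show False using assms(2) pi_gt3 by linarith
    qed
  qed
  moreover have "exp (2*h) = exp h * exp h" by (metis exp_add mult_2)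
  ultimately show ?thesis by (metis mult_minus1 mult_1 minus_minus mult_minus_left)
qed

lemma lim_eq_at0:
  fixes f g :: "complex \<Rightarrow> 'b::t2_space"
  assumes "(f \<longlongrightarrow> a) (at 0)" "(g \<longlongrightarrow> b) (at 0)" "eventually (\<lambda>x. f x = g x) (at 0)"
  shows "a = b"
  using tendsto_unique[OF at_neq_bot assms(2) Lim_transform_eventually[OF assms(1) assms(3)]] by simp

lemma sderiv: "((\<lambda>h::complex. (exp (-h) - exp h) / h) \<longlongrightarrow> -2) (at 0)"
proof -
  have "((\<lambda>h::complex. exp (-h) - exp h) has_field_derivative (-1 - 1)) (at 0)"
    by (auto intro!: derivative_eq_intros)
  thus ?thesis by (simp add: has_field_derivative_iff)
qed

lemma csc_inj: "csc c A = csc c B \<Longrightarrow> c \<noteq> 0 \<Longrightarrow> A = B"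
  by (simp add: vec_eq_iff)

lemma abc_lemma: "u \<noteq> v \<Longrightarrow> u \<noteq> w \<Longrightarrow> v \<noteq> (w::complex) \<Longrightarrow>
  u/(u-v) * (u/(u-w)) - u/(u-v) * (v/(v-w)) + u/(u-w)*(v/(v-w)) = u/(u-w)"
proof -
  assume d: "u \<noteq> v" "u \<noteq> w" "v \<noteq> w"
  hence n: "u-v \<noteq> 0" "u-w \<noteq> 0" "v-w \<noteq> 0" by auto
  have "u/(u-v) * (u/(u-w)) - u/(u-v) * (v/(v-w)) + u/(u-w)*(v/(v-w))
     = (u*u*(v-w) - u * v * (u-w) + u * v * (u-v)) / ((u-v)*(u-w)*(v-w))"
    using n by (simp add: divide_simps)
  also have "u*u*(v-w) - u * v * (u-w) + u * v * (u-v) = u*((u-v)*(v-w))" by (simp add: algebra_simps)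
  also have "u*((u-v)*(v-w)) / ((u-v)*(u-w)*(v-w)) = u/(u-w)" using n by (simp add: divide_simps)
  finally show ?thesis .
qed

lemma nle: "norm ((A::'n::finite end2) $ i $ j) \<le> norm A"
proof -
  have "norm (A $ i $ j) \<le> norm (A $ i)" by (rule Finite_Cartesian_Product.norm_nth_le)
  also have "\<dots> \<le> norm A" by (rule Finite_Cartesian_Product.norm_nth_le)
  finally show ?thesis .
qed

theorem mainTheorem2:
  fixes F r :: "'n::finite end2"
    and R :: "complex \<Rightarrow> 'n end2"
    and S :: "complex set"
  assumes F_inv: "involutive_symmetry F"
    and S_open: "open S" and S_one: "1 \<in> S"
    and R_analytic: "\<And>i j. (\<lambda>q. R q $ i $ j) holomorphic_on S"
    and R_one: "R 1 = F"
    and R_hecke: "\<And>q. q \<in> S \<Longrightarrow> q \<noteq> 1 \<Longrightarrow> q \<noteq> -1 \<Longrightarrow> hecke_symmetry (R q) q"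
    and R_compat: "\<And>q. q \<in> S \<Longrightarrow> compatible (R q) F"
    and r_exp: "\<exists>C. \<forall>\<^sub>F h in at 0.
                  norm (R (exp h) ** F - mat 1 - csc h r) \<le> C * norm h ^ 2"
  shows "(\<forall>u v. u \<noteq> v \<longrightarrow> ov21 F (rfun F r v u) + rfun F r u v = 0)
       \<and> (\<forall>u v w. u \<noteq> v \<and> u \<noteq> w \<and> v \<noteq> w \<longrightarrow>
            commut (ov12 (rfun F r u v)) (ov13 F (rfun F r u w))
          + commut (ov12 (rfun F r u v)) (ov23 F (rfun F r v w))
          + commut (ov13 F (rfun F r u w)) (ov23 F (rfun F r v w)) = 0)"
proof -
  have FF: "F ** F = mat 1" and brF: "lift12 F ** lift23 F ** lift12 F = lift23 F ** lift12 F ** lift23 F"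
    using F_inv by (auto simp: involutive_symmetry_def braiding_def)
  define f1 where "f1 = lift12 F"
  define f2 where "f2 = lift23 F"
  have s1: "f1**f1 = mat 1" unfolding f1_def by (simp add: lift12_mul[symmetric] FF lift12_one)
  have s2: "f2**f2 = mat 1" unfolding f2_def by (simp add: lift23_mul[symmetric] FF lift23_one)
  have br: "f1**f2**f1 = f2**f1**f2" using brF unfolding f1_def f2_def .
  have s1': "f1**(f1**X) = X" for X by (simp add: matrix_mul_assoc s1)
  have s2': "f2**(f2**X) = X" for X by (simp add: matrix_mul_assoc s2)
  have s3: "f1**(f2**f1) = f2**(f1**f2)" using br by (simp add: matrix_mul_assoc)
  have s3': "f1**(f2**(f1**X)) = f2**(f1**(f2**X))" for X using br by (simp add: matrix_mul_assoc)
  note S3 = s1 s2 s1' s2' s3 s3'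
  have FF': "F**(F**X) = X" for X :: "'n end2" by (simp add: matrix_mul_assoc FF)
  have inv1: "matrix_inv f1 = f1" by (rule matrix_inv_self[OF s1])
  have inv2: "matrix_inv f2 = f2" by (rule matrix_inv_self[OF s2])

  have ev_ne: "\<forall>\<^sub>F h in at (0::complex). h \<noteq> 0 \<and> norm h < 1"
    unfolding eventually_at by (rule exI[of _ 1]) auto
  have "((\<lambda>h::complex. exp h) \<longlongrightarrow> exp 0) (at 0)"
    by (intro tendsto_intros)
  hence "((\<lambda>h::complex. exp h) \<longlongrightarrow> 1) (at 0)" by simp
  hence ev_S: "\<forall>\<^sub>F h in at (0::complex). exp h \<in> S"
    using S_open S_one by (rule topological_tendstoD)
  have ev_good: "\<forall>\<^sub>F h in at (0::complex). h \<noteq> 0 \<and> exp h \<in> S \<and> exp h \<noteq> 1 \<and> exp h \<noteq> -1"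
    using ev_ne ev_S by eventually_elim (use exp_ne_pm1 in blast)

  define X where "X h = csc (1/h) (R (exp h) - F)" for h
  define \<rho> where "\<rho> = r ** F"
  have RX: "R (exp h) = F + csc h (X h)" if "h \<noteq> 0" for h
    using that by (simp add: X_def vec_eq_iff)

  obtain C where C: "\<forall>\<^sub>F h in at 0. norm (R (exp h) ** F - mat 1 - csc h r) \<le> C * norm h ^ 2"
    using r_exp by blast
  define M where "M h = R (exp h) ** F - mat 1 - csc h r" for h
  have Mlim: "((\<lambda>h. csc (1/h) (M h)) \<longlongrightarrow> 0) (at 0)"
  proof (rule vec_tendstoI, rule vec_tendstoI)
    fix i j
    have g: "((\<lambda>h::complex. C * norm h) \<longlongrightarrow> 0) (at 0)"
      by (intro tendsto_mult_right_zero tendsto_norm_zero tendsto_ident_at)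
    have "\<forall>\<^sub>F h in at 0. norm (csc (1/h) (M h) $ i $ j) \<le> C * norm h"
      using C ev_ne
    proof eventually_elim
      case (elim h)
      have "norm (M h $ i $ j) \<le> norm (M h $ i)" by (rule Finite_Cartesian_Product.norm_nth_le)
      also have "\<dots> \<le> norm (M h)" by (rule Finite_Cartesian_Product.norm_nth_le)
      finally have "norm (M h $ i $ j) \<le> norm (M h)" .
      hence "norm (M h $ i $ j) \<le> C * norm h ^ 2" using elim M_def by simp
      hence "norm (M h $ i $ j) / norm h \<le> C * norm h ^ 2 / norm h"
        by (simp add: divide_right_mono)
      thus ?case using elim by (simp add: norm_divide power2_eq_square norm_mult)
    qed
    thus "((\<lambda>h. csc (1/h) (M h) $ i $ j) \<longlongrightarrow> 0 $ i $ j) (at 0)"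
      using Lim_null_comparison[OF _ g] by simp
  qed
  have Xlim: "(X \<longlongrightarrow> \<rho>) (at 0)"
  proof -
    have "((\<lambda>h. (csc (1/h) (M h) + r) ** F) \<longlongrightarrow> (0 + r) ** F) (at 0)"
      by (intro tendsto_intros Mlim)
    moreover have "\<forall>\<^sub>F h in at 0. (csc (1/h) (M h) + r) ** F = X h"
      using ev_ne
    proof eventually_elim
      case (elim h)
      have "csc (1/h) (M h) + r = csc (1/h) (R (exp h) ** F - mat 1)"
        using elim by (simp add: M_def vec_eq_iff field_simps)
      thus ?case by (simp add: X_def mdist FF FF')
    qed
    ultimately show ?thesis unfolding \<rho>_def using Lim_transform_eventually by fastforce
  qed
  define G where "G h = F**X h + X h**F + csc h (X h ** X h)
      + csc ((exp (-h) - exp h)/h) (F + csc h (X h))" for h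
  have Glim: "(G \<longlongrightarrow> F**\<rho> + \<rho>**F + csc 0 (\<rho>**\<rho>) + csc (-2) (F + csc 0 \<rho>)) (at 0)"
    unfolding G_def by (intro tendsto_intros Xlim sderiv tendsto_ident_at)
  have Gev: "\<forall>\<^sub>F h in at 0. G h = 0"
    using ev_good
  proof eventually_elim
    case (elim h)
    hence hz: "h \<noteq> 0" and hk: "hecke_symmetry (R (exp h)) (exp h)"
      using R_hecke by auto
    define q where "q = exp h"
    have qi: "inverse q = exp (-h)" unfolding q_def by (simp add: exp_minus)
    have E: "(F + csc h (X h) - csc q (mat 1)) ** (F + csc h (X h) + csc (inverse q) (mat 1)) = 0"
      using hk RX[OF hz] unfolding q_def hecke_symmetry_def by simp
    have E2: "csc h (F**X h) + csc h (X h**F) + csc (h*h) (X h ** X h)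
       + csc (inverse q - q) F + csc (h*(inverse q - q)) (X h) = 0"
    proof -
      have "(F + csc h (X h) - csc q (mat 1)) ** (F + csc h (X h) + csc (inverse q) (mat 1))
         = csc h (F**X h) + csc h (X h**F) + csc (h*h) (X h ** X h)
       + csc (inverse q - q) F + csc (h*(inverse q - q)) (X h) + csc (1 - q * inverse q) (mat 1)"
        by (simp add: mdist FF csc_minus csc_plus algebra_simps)
      moreover have "q * inverse q = 1" unfolding q_def by simp
      ultimately show ?thesis using E by simp
    qed
    have "csc h (G h) = 0"
    proof -
      have "csc h (G h) = csc h (F**X h) + csc h (X h**F) + csc (h*h) (X h ** X h)
       + csc (inverse q - q) F + csc (h*(inverse q - q)) (X h)"
        unfolding G_def qi[symmetric] using hz by (simp add: vec_eq_iff field_simps q_def)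
      thus ?thesis using E2 by simp
    qed
    thus ?case using hz by (rule csc_cancel)
  qed
  have rel0: "F**\<rho> + \<rho>**F + csc (-2) F = 0"
    using lim_eq_at0[OF Glim tendsto_const[of 0] Gev] by simp
  have relr: "r + F**r**F = csc 2 F"
  proof -
    have "F**r**F + r + csc (-2) F = 0" using rel0 unfolding \<rho>_def by (simp add: mdist FF)
    thus ?thesis by (simp add: vec_eq_iff algebra_simps)
  qed
  have cF: "compatible F F" using R_compat[OF S_one] R_one by simp
  have ev_x: "\<forall>\<^sub>F h in at 0.
      lift12 (X h) ** (f2 ** f1) = f2 ** (f1 ** lift23 (X h)) \<and>
      lift23 (X h) ** (f1 ** f2) = f1 ** (f2 ** lift12 (X h)) \<and>
      Qw f1 f2 (lift12 (X h)) (lift23 (X h)) + csc h (Kw (lift12 (X h)) (lift23 (X h))) = 0"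
    using ev_good
  proof eventually_elim
    case (elim h)
    hence hz: "h \<noteq> 0" by simp
    have cR: "compatible (R (exp h)) F" and bR: "braiding (R (exp h))"
      using elim R_compat R_hecke by (auto simp: hecke_symmetry_def)
    define x1 where "x1 = lift12 (X h)"
    define x2 where "x2 = lift23 (X h)"
    have l1: "lift12 (R (exp h)) = f1 + csc h x1"
      unfolding x1_def f1_def RX[OF hz] by (simp add: lift12_add lift12_csc)
    have l2: "lift23 (R (exp h)) = f2 + csc h x2"
      unfolding x2_def f2_def RX[OF hz] by (simp add: lift23_add lift23_csc)
    have c1': "(f1 + csc h x1) ** f2 ** f1 = f2 ** f1 ** (f2 + csc h x2)"
      using cR unfolding compatible_def l1 l2 f1_def[symmetric] f2_def[symmetric] by simp
    have c2': "(f2 + csc h x2) ** f1 ** f2 = f1 ** f2 ** (f1 + csc h x1)"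
      using cR unfolding compatible_def l1 l2 f1_def[symmetric] f2_def[symmetric] by simp
    have C1: "x1 ** (f2 ** f1) = f2 ** (f1 ** x2)"
    proof (rule csc_inj[OF _ hz])
      show "csc h (x1 ** (f2 ** f1)) = csc h (f2 ** (f1 ** x2))"
        using c1' by (simp add: mdist S3)
    qed
    have C2: "x2 ** (f1 ** f2) = f1 ** (f2 ** x1)"
    proof (rule csc_inj[OF _ hz])
      show "csc h (x2 ** (f1 ** f2)) = csc h (f1 ** (f2 ** x1))"
        using c2' by (simp add: mdist S3)
    qed
    have bR': "(f1 + csc h x1) ** (f2 + csc h x2) ** (f1 + csc h x1)
       - (f2 + csc h x2) ** (f1 + csc h x1) ** (f2 + csc h x2) = 0"
      using bR unfolding braiding_def l1 l2 by simp
    have Lz: "Lw f1 f2 (csc h x1) (csc h x2) = 0"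
      by (rule Lw_zero[OF s1 s2]) (use C1 C2 in \<open>simp_all add: mdist\<close>)
    have "Qw f1 f2 (csc h x1) (csc h x2) + Kw (csc h x1) (csc h x2) = 0"
      using bR' unfolding braid_expand Lz using br by simp
    hence "csc (h^2) (Qw f1 f2 x1 x2 + csc h (Kw x1 x2)) = 0"
      by (simp add: Qw_scale Kw_scale csc_add power2_eq_square power3_eq_cube mult.assoc)
    hence "Qw f1 f2 x1 x2 + csc h (Kw x1 x2) = 0" by (rule csc_cancel) (use hz in simp)
    thus ?case using C1 C2 unfolding x1_def x2_def by simp
  qed
  have C1r: "lift12 \<rho> ** (f2 ** f1) = f2 ** (f1 ** lift23 \<rho>)"
    by (rule lim_eq_at0[where f="\<lambda>h. lift12 (X h) ** (f2 ** f1)" and g="\<lambda>h. f2 ** (f1 ** lift23 (X h))"])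
       (intro tendsto_intros Xlim, intro tendsto_intros Xlim, use ev_x in \<open>eventually_elim, simp\<close>)
  have Qr: "Qw f1 f2 (lift12 \<rho>) (lift23 \<rho>) + csc 0 (Kw (lift12 \<rho>) (lift23 \<rho>)) = 0"
    by (rule lim_eq_at0[where f="\<lambda>h. Qw f1 f2 (lift12 (X h)) (lift23 (X h)) + csc h (Kw (lift12 (X h)) (lift23 (X h)))" and g="\<lambda>h. 0"])
       (unfold Qw_def Kw_def, intro tendsto_intros Xlim tendsto_ident_at, simp, use ev_x in \<open>eventually_elim, simp add: Qw_def Kw_def\<close>)
  define P where "P = lift12 r"
  define T where "T = lift23 r"
  have lr1: "lift12 \<rho> = P ** f1" unfolding \<rho>_def P_def f1_def by (simp add: lift12_mul)
  have lr2: "lift23 \<rho> = T ** f2" unfolding \<rho>_def T_def f2_def by (simp add: lift23_mul)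
  have Tdef: "T = f1**f2**P**f2**f1"
  proof -
    have "f1**(f2**((P**f1)**(f2**f1)))**f2 = f1**(f2**(f2**(f1**(T**f2))))**f2"
      using C1r unfolding lr1 lr2 by simp
    thus ?thesis by (simp add: mdist S3)
  qed
  have QP: "Qw f1 f2 (P**f1) (T**f2) = 0" using Qr unfolding lr1 lr2 by simp
  have CY0: "commut P (f2**P**f2) + commut P T + commut (f2**P**f2) T = 0"
    by (rule Q_to_cybe[OF s1 s2 br QP Tdef])
  have CY: "commut P (f2**P**f2) + commut P (f1**f2**P**f2**f1) + commut (f2**P**f2) (f1**f2**P**f2**f1) = 0"
    using CY0 unfolding Tdef .
  have relP: "P + f1**P**f1 = csc 2 f1"
  proof -
    have "lift12 (r + F**r**F) = lift12 (csc 2 F)" using relr by simp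
    thus ?thesis unfolding P_def f1_def by (simp add: lift12_add lift12_mul lift12_csc)
  qed
  have relr': "F**(r**F) = csc 2 F - r"
    using relr by (simp add: matrix_mul_assoc eq_diff_eq add.commute)
  show ?thesis
  proof (intro conjI allI impI)
    fix u v :: complex assume uv: "u \<noteq> v"
    have "ov21 F (rfun F r v u) + rfun F r u v
      = csc (v/(v-u)) F - csc (1/2) (csc 2 F - r) + csc (u/(u-v)) F - csc (1/2) r"
      unfolding ov21_def rfun_def by (simp add: mdist FF FF' relr' diff_add_eq)
    also have "\<dots> = 0"
    proof -
      have "v/(v-u) - 1 + u/(u-v) = 0" using uv
        by (simp add: field_simps)
      hence "\<forall>i j. v/(v-u) * F$i$j - F$i$j + u/(u-v) * F$i$j = 0"
        by (metis (no_types) add.commute diff_add_eq left_diff_distrib distrib_right mult_1 mult_zero_left)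
      thus ?thesis by (simp add: vec_eq_iff algebra_simps)
    qed
    finally show "ov21 F (rfun F r v u) + rfun F r u v = 0" .
  next
    fix u v w :: complex assume d: "u \<noteq> v \<and> u \<noteq> w \<and> v \<noteq> w"
    define a where "a = u/(u-v)"
    define b where "b = u/(u-w)"
    define c where "c = v/(v-w)"
    have abc: "a*b - a*c + b*c = b"
      unfolding a_def b_def c_def using d abc_lemma by blast
    have o12: "ov12 (rfun F r u v) = csc a f1 - csc (1/2) P"
      unfolding ov12_def rfun_def a_def P_def f1_def by (simp add: lift12_diff lift12_csc)
    have o13: "ov13 F (rfun F r u w) = csc b (f2**f1**f2) - csc (1/2) (f2**P**f2)"
      unfolding ov13_def f2_def[symmetric] inv2 rfun_def b_def
      by (simp add: lift12_diff lift12_csc f1_def[symmetric] P_def[symmetric] mdist)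
    have o23: "ov23 F (rfun F r v w) = csc c f2 - csc (1/2) (f1**f2**P**f2**f1)"
      unfolding ov23_def f2_def[symmetric] f1_def[symmetric] inv2 inv1 rfun_def c_def
      by (simp add: lift12_diff lift12_csc f1_def[symmetric] P_def[symmetric] mdist S3)
    show "commut (ov12 (rfun F r u v)) (ov13 F (rfun F r u w))
          + commut (ov12 (rfun F r u v)) (ov23 F (rfun F r v w))
          + commut (ov13 F (rfun F r u w)) (ov23 F (rfun F r v w)) = 0"
      unfolding o12 o13 o23 by (rule cybe_final[OF s1 s2 br relP CY abc])
  qed
qed

end
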